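(* Let $X$ be a separable Hilbert space over $K$ with orthonormal basis $\{e_j\}_{j=1,2,\ldots}\cup\{e_i^*\}_{i=1,2,\ldots}$, and let $Z$ be the proper closed subspace of $X$ with orthonormal basis $\{e_j\}$. Let $p:X\to\mathbb{R}$ be a uniformly continuous sub-additive functional with $p(0)=0$, and let $F:Z\to\mathbb{R}$ be a continuous functional with $F(0)=0$ such that $F(z_1)+F(z_2)\le p(z_1+z_2)$ for all orthogonal vectors $z_1,z_2$ lying in the union of the one-dimensional subspaces spanned by the individual $e_j$. Then there exists a continuous functional $\hat F:X\to\mathbb{R}$ with $\hat F(z)=F(z)$ for $z\in Z$ and $\hat F(x_1)+\hat F(x_2)\le p(x_1+x_2)$ for all orthogonal vectors $x_1,x_2$ lying in the union of the one-dimensional subspaces spanned by the individual $e_j$ or $e_i^*$.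
   Context: $K$ is $\mathbb{R}$ or $\mathbb{C}$. A functional $p$ is sub-additive if $p(x+y)\le p(x)+p(y)$ for all $x,y$. *)

theory Defs
  imports "HOL-Analysis.Analysis"
begin

text \<open>We model a complex Hilbert space as a complete real normed vector space together
  with a complex scalar multiplication extending the real one and a complex inner
  product (linear in the first argument, conjugate symmetric) inducing the norm.\<close>

definition complex_hilbert ::
  "(complex \<Rightarrow> 'b::real_normed_vector \<Rightarrow> 'b) \<Rightarrow> ('b \<Rightarrow> 'b \<Rightarrow> complex) \<Rightarrow> bool" where
  "complex_hilbert sc ip \<longleftrightarrow>
     (\<forall>a x y. sc a (x + y) = sc a x + sc a y) \<and>
     (\<forall>a b x. sc (a + b) x = sc a x + sc b x) \<and>
     (\<forall>a b x. sc a (sc b x) = sc (a * b) x) \<and>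
     (\<forall>r x. sc (complex_of_real r) x = r *\<^sub>R x) \<and>
     (\<forall>x y z. ip (x + y) z = ip x z + ip y z) \<and>
     (\<forall>a x y. ip (sc a x) y = a * ip x y) \<and>
     (\<forall>x y. ip y x = cnj (ip x y)) \<and>
     (\<forall>x. ip x x = complex_of_real ((norm x)\<^sup>2))"

definition cspan :: "(complex \<Rightarrow> 'b \<Rightarrow> 'b) \<Rightarrow> 'b::comm_monoid_add set \<Rightarrow> 'b set" where
  "cspan sc S = {x. \<exists>T c. finite T \<and> T \<subseteq> S \<and> x = (\<Sum>v\<in>T. sc (c v) v)}"


end

theory Submission
  imports Defs
begin


lemma tietze_real:
  fixes f :: "'a::metric_space \<Rightarrow> real"
  assumes "continuous_on S f" "closed S"
  obtains g where "continuous_on UNIV g" "\<And>x. x \<in> S \<Longrightarrow> g x = f x"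
proof -
  have "normal_space (euclidean :: 'a topology)"
    by (simp add: metrizable_imp_normal_space metrizable_space_euclidean)
  moreover have "closedin euclidean S" using assms by simp
  moreover have "continuous_map (subtopology euclidean S) euclideanreal f"
    using assms by simp
  ultimately obtain g where "continuous_map euclidean euclideanreal g" "\<And>x. x \<in> S \<Longrightarrow> g x = f x"
    using Tietze_extension_realinterval[of euclidean S UNIV f] by auto
  then show ?thesis using that by simp
qed

lemma extend_gen:
  fixes Z W :: "'a::real_normed_vector set" and F p :: "'a \<Rightarrow> real"
  assumes Z: "closed Z" and ZW: "Z \<inter> closure W \<subseteq> {0}" and F: "continuous_on Z F"
    and p: "continuous_on UNIV p" and F0: "F 0 = 0" and p0: "p 0 = 0"
  obtains Fh where "continuous_on UNIV Fh" "\<forall>z\<in>Z. Fh z = F z" "\<forall>y\<in>W. Fh y = - p (-y)"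
proof -
  define f where "f x = (if x \<in> Z then F x else - p (-x))" for x
  have c1: "continuous_on Z f"
    using F by (rule continuous_on_eq) (simp add: f_def)
  have c2': "continuous_on (closure W) (\<lambda>x. - p (-x))"
    by (intro continuous_intros continuous_on_compose2[OF p]) auto
  have c2: "continuous_on (closure W) f"
    using c2' by (rule continuous_on_eq) (use ZW F0 p0 in \<open>auto simp: f_def\<close>)
  have "continuous_on (Z \<union> closure W) f"
    by (rule continuous_on_closed_Un[OF Z _ c1 c2]) simp
  then obtain g where g: "continuous_on UNIV g" "\<And>x. x \<in> Z \<union> closure W \<Longrightarrow> g x = f x"
    using tietze_real[of "Z \<union> closure W" f] Z by blast
  show ?thesis
  proof (rule that[OF g(1)])
    show "\<forall>z\<in>Z. g z = F z" using g(2) by (auto simp: f_def)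
    show "\<forall>y\<in>W. g y = - p (-y)"
    proof
      fix y assume y: "y \<in> W"
      then have "y \<in> closure W" using closure_subset by blast
      then show "g y = - p (-y)" using g(2) ZW F0 p0 by (auto simp: f_def)
    qed
  qed
qed

lemma ineq_gen:
  fixes p Fh :: "'a::ab_group_add \<Rightarrow> real"
  assumes sub: "\<forall>x y. p (x + y) \<le> p x + p y" and p0: "p 0 = 0"
    and L: "\<forall>a\<in>L. Fh a \<le> p a" and W: "\<forall>y\<in>W. Fh y = - p (-y)"
    and x1: "x1 \<in> L \<union> W" and x2: "x2 \<in> L \<union> W"
    and LL: "x1 \<in> L \<Longrightarrow> x2 \<in> L \<Longrightarrow> Fh x1 + Fh x2 \<le> p (x1 + x2)"
  shows "Fh x1 + Fh x2 \<le> p (x1 + x2)"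
proof -
  have A: "p a \<le> p (a + b) + p (- b)" for a b
    using sub[rule_format, of "a + b" "- b"] by simp
  have B: "0 \<le> p c + p (- c)" for c
    using sub[rule_format, of c "- c"] p0 by simp
  have C: "p (- (a + b)) \<le> p (- a) + p (- b)" for a b
    using sub[rule_format, of "- a" "- b"] by (simp add: add.commute)
  show ?thesis
  proof (cases "x1 \<in> L")
    case True
    show ?thesis
    proof (cases "x2 \<in> L")
      case True then show ?thesis using LL \<open>x1 \<in> L\<close> by blast
    next
      case False
      then have "x2 \<in> W" using x2 by blast
      then show ?thesis using L True W A[of x1 x2] by force
    qed
  next
    case False
    then have w1: "x1 \<in> W" using x1 by blast
    show ?thesis
    proof (cases "x2 \<in> L")
      case True then show ?thesis using L w1 W A[of x2 x1] by (force simp: add.commute)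
    next
      case False
      then have "x2 \<in> W" using x2 by blast
      then show ?thesis using w1 W B[of "x1 + x2"] C[of x1 x2] by force
    qed
  qed
qed


lemma real_case:
  fixes e e' :: "nat \<Rightarrow> 'a::{real_inner,complete_space}" and p F :: "'a \<Rightarrow> real"
  assumes disj: "range e \<inter> range e' = {}"
    and on: "\<forall>u\<in>range e \<union> range e'. \<forall>v\<in>range e \<union> range e'. inner u v = (if u = v then 1 else 0)"
    and uc: "uniformly_continuous_on UNIV p" and sub: "\<forall>x y. p (x + y) \<le> p x + p y" and p0: "p 0 = 0"
    and Fc: "continuous_on (closure (span (range e))) F" and F0: "F 0 = 0"
    and hyp: "\<forall>z1\<in>(\<Union>j. range (\<lambda>c. c *\<^sub>R e j)). \<forall>z2\<in>(\<Union>j. range (\<lambda>c. c *\<^sub>R e j)).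
          inner z1 z2 = 0 \<longrightarrow> F z1 + F z2 \<le> p (z1 + z2)"
  shows "\<exists>Fh :: 'a \<Rightarrow> real. continuous_on UNIV Fh \<and>
            (\<forall>z\<in>closure (span (range e)). Fh z = F z) \<and>
            (\<forall>x1\<in>(\<Union>j. range (\<lambda>c. c *\<^sub>R e j)) \<union> (\<Union>i. range (\<lambda>c. c *\<^sub>R e' i)).
             \<forall>x2\<in>(\<Union>j. range (\<lambda>c. c *\<^sub>R e j)) \<union> (\<Union>i. range (\<lambda>c. c *\<^sub>R e' i)).
               inner x1 x2 = 0 \<longrightarrow> Fh x1 + Fh x2 \<le> p (x1 + x2))"
proof -
  define Z where "Z = closure (span (range e))"
  define L where "L = (\<Union>j. range (\<lambda>c. c *\<^sub>R e j))"
  define W where "W = (\<Union>i. range (\<lambda>c. c *\<^sub>R e' i))"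
  have orth: "inner (e j) (e' i) = 0" for i j
  proof -
    have "e j \<noteq> e' i" using disj by blast
    then show ?thesis using on by auto
  qed
  have Zorth: "inner (e' i) x = 0" if "x \<in> Z" for x i
  proof -
    have sub1: "subspace {x. inner (e' i) x = 0}"
      by (auto simp: subspace_def inner_add_right)
    have "span (range e) \<subseteq> {x. inner (e' i) x = 0}"
      by (rule span_minimal[OF _ sub1]) (auto simp: orth inner_commute)
    then have "Z \<subseteq> {x. inner (e' i) x = 0}"
      unfolding Z_def by (rule closure_minimal) (rule closed_hyperplane)
    then show ?thesis using that by blast
  qed
  have ZW: "Z \<inter> closure W \<subseteq> {0}"
  proof
    fix x assume x: "x \<in> Z \<inter> closure W"
    have "W \<subseteq> {y. inner x y = 0}"
      using Zorth x by (auto simp: W_def inner_commute)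
    then have "closure W \<subseteq> {y. inner x y = 0}"
      by (rule closure_minimal) (rule closed_hyperplane)
    then show "x \<in> {0}" using x by auto
  qed
  have LZ: "L \<subseteq> Z"
    unfolding L_def Z_def using closure_subset by (force intro: span_mul span_base)
  have 0: "0 \<in> L" unfolding L_def by (auto intro!: exI[of _ 0] image_eqI[of _ _ 0])
  have Fle: "\<forall>a\<in>L. F a \<le> p a"
    using hyp 0 F0 unfolding L_def by force
  have pc: "continuous_on UNIV p" using uc by (rule uniformly_continuous_imp_continuous)
  obtain Fh where Fh: "continuous_on UNIV Fh" "\<forall>z\<in>Z. Fh z = F z" "\<forall>y\<in>W. Fh y = - p (-y)"
    using extend_gen[of Z W F p] ZW Fc pc F0 p0 unfolding Z_def by auto
  show ?thesis
  proof (intro exI[of _ Fh] conjI ballI impI)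
    show "continuous_on UNIV Fh" by fact
    show "Fh z = F z" if "z \<in> closure (span (range e))" for z using Fh that Z_def by auto
    fix x1 x2 assume x1: "x1 \<in> (\<Union>j. range (\<lambda>c. c *\<^sub>R e j)) \<union> (\<Union>i. range (\<lambda>c. c *\<^sub>R e' i))"
      and x2: "x2 \<in> (\<Union>j. range (\<lambda>c. c *\<^sub>R e j)) \<union> (\<Union>i. range (\<lambda>c. c *\<^sub>R e' i))"
      and io: "inner x1 x2 = 0"
    show "Fh x1 + Fh x2 \<le> p (x1 + x2)"
    proof (rule ineq_gen[OF sub p0 _ Fh(3)])
      show "\<forall>a\<in>L. Fh a \<le> p a" using Fle Fh(2) LZ by auto
      show "x1 \<in> L \<union> W" "x2 \<in> L \<union> W" using x1 x2 by (auto simp: L_def W_def)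
      assume "x1 \<in> L" "x2 \<in> L"
      moreover have "Fh x1 = F x1" "Fh x2 = F x2" using \<open>x1 \<in> L\<close> \<open>x2 \<in> L\<close> Fh(2) LZ by auto
      moreover have "F x1 + F x2 \<le> p (x1 + x2)"
        using hyp io \<open>x1 \<in> L\<close> \<open>x2 \<in> L\<close> unfolding L_def by blast
      ultimately show "Fh x1 + Fh x2 \<le> p (x1 + x2)" by simp
    qed
  qed
qed

context
  fixes sc :: "complex \<Rightarrow> 'b::real_normed_vector \<Rightarrow> 'b" and ip :: "'b \<Rightarrow> 'b \<Rightarrow> complex"
  assumes H: "complex_hilbert sc ip"
begin

lemma ip_add1: "ip (x + y) z = ip x z + ip y z" using H unfolding complex_hilbert_def by blast
lemma ip_sc1: "ip (sc a x) y = a * ip x y" using H unfolding complex_hilbert_def by blast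
lemma ip_cnj: "ip y x = cnj (ip x y)" using H unfolding complex_hilbert_def by blast
lemma ip_norm: "ip x x = complex_of_real ((norm x)\<^sup>2)" using H unfolding complex_hilbert_def by blast
lemma sc_real: "sc (complex_of_real r) x = r *\<^sub>R x" using H unfolding complex_hilbert_def by blast

lemma ip_add2: "ip x (y + z) = ip x y + ip x z"
  by (metis ip_cnj ip_add1 complex_cnj_add)
lemma ip_sc2: "ip x (sc a y) = cnj a * ip x y"
  by (metis ip_cnj ip_sc1 complex_cnj_mult)
lemma ip_01: "ip 0 y = 0"
  using ip_add1[of 0 0 y] by simp
lemma ip_02: "ip y 0 = 0"
  using ip_01 ip_cnj by (metis complex_cnj_zero)
lemma sc_0: "sc 0 x = 0"
  using sc_real[of 0 x] by simp

lemma Re_ip: "Re (ip x y) = ((norm (x + y))\<^sup>2 - (norm x)\<^sup>2 - (norm y)\<^sup>2) / 2"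
proof -
  have "ip (x + y) (x + y) = ip x x + ip x y + ip y x + ip y y"
    by (simp add: ip_add1 ip_add2)
  then have "(norm (x + y))\<^sup>2 = (norm x)\<^sup>2 + Re (ip x y) + Re (ip y x) + (norm y)\<^sup>2"
    by (metis ip_norm Re_complex_of_real plus_complex.sel(1))
  moreover have "Re (ip y x) = Re (ip x y)" by (subst ip_cnj) simp
  ultimately show ?thesis by simp
qed

lemma closed_Re_ip: "closed {y. Re (ip y x) = 0}"
proof -
  have "{y. Re (ip y x) = 0} = {y. ((norm (y + x))\<^sup>2 - (norm y)\<^sup>2 - (norm x)\<^sup>2) / 2 = 0}"
    by (simp only: Re_ip)
  also have "closed \<dots>"
    by (intro closed_Collect_eq continuous_intros) auto
  finally show ?thesis .
qed

lemma closed_ip: "closed {y. ip y x = 0}"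
proof -
  have "{y. ip y x = 0} = {y. Re (ip y x) = 0} \<inter> {y. Re (ip y (sc \<i> x)) = 0}"
    by (auto simp: ip_sc2 complex_eq_iff)
  then show ?thesis using closed_Re_ip by (metis closed_Int)
qed

lemma ip_sum: "finite T \<Longrightarrow> ip (\<Sum>v\<in>T. sc (c v) v) w = (\<Sum>v\<in>T. c v * ip v w)"
  by (induction T rule: finite_induct) (auto simp: ip_01 ip_add1 ip_sc1)


lemma complex_case:
  fixes e e' :: "nat \<Rightarrow> 'b" and p F :: "'b \<Rightarrow> real"
  assumes disj: "range e \<inter> range e' = {}"
    and on: "\<forall>u\<in>range e \<union> range e'. \<forall>v\<in>range e \<union> range e'. ip u v = (if u = v then 1 else 0)"
    and uc: "uniformly_continuous_on UNIV p" and sub: "\<forall>x y. p (x + y) \<le> p x + p y" and p0: "p 0 = 0"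
    and Fc: "continuous_on (closure (cspan sc (range e))) F" and F0: "F 0 = 0"
    and hyp: "\<forall>z1\<in>(\<Union>j. range (\<lambda>c. sc c (e j))). \<forall>z2\<in>(\<Union>j. range (\<lambda>c. sc c (e j))).
          ip z1 z2 = 0 \<longrightarrow> F z1 + F z2 \<le> p (z1 + z2)"
  shows "\<exists>Fh :: 'b \<Rightarrow> real. continuous_on UNIV Fh \<and>
            (\<forall>z\<in>closure (cspan sc (range e)). Fh z = F z) \<and>
            (\<forall>x1\<in>(\<Union>j. range (\<lambda>c. sc c (e j))) \<union> (\<Union>i. range (\<lambda>c. sc c (e' i))).
             \<forall>x2\<in>(\<Union>j. range (\<lambda>c. sc c (e j))) \<union> (\<Union>i. range (\<lambda>c. sc c (e' i))).
               ip x1 x2 = 0 \<longrightarrow> Fh x1 + Fh x2 \<le> p (x1 + x2))"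
proof -
  define Z where "Z = closure (cspan sc (range e))"
  define L where "L = (\<Union>j. range (\<lambda>c. sc c (e j)))"
  define W where "W = (\<Union>i. range (\<lambda>c. sc c (e' i)))"
  have orth: "ip (e j) (e' i) = 0" for i j
  proof -
    have "e j \<noteq> e' i" using disj by blast
    then show ?thesis using on by auto
  qed
  have Zorth: "ip x (e' i) = 0" if "x \<in> Z" for x i
  proof -
    have "cspan sc (range e) \<subseteq> {x. ip x (e' i) = 0}"
    proof
      fix x assume "x \<in> cspan sc (range e)"
      then obtain T c where T: "finite T" "T \<subseteq> range e" "x = (\<Sum>v\<in>T. sc (c v) v)"
        unfolding cspan_def by blast
      have "ip x (e' i) = (\<Sum>v\<in>T. c v * ip v (e' i))" using T ip_sum by simp
      also have "\<dots> = 0" using T(2) orth by (intro sum.neutral) auto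
      finally show "x \<in> {x. ip x (e' i) = 0}" by simp
    qed
    then have "Z \<subseteq> {x. ip x (e' i) = 0}"
      unfolding Z_def by (rule closure_minimal) (rule closed_ip)
    then show ?thesis using that by blast
  qed
  have ZW: "Z \<inter> closure W \<subseteq> {0}"
  proof
    fix x assume x: "x \<in> Z \<inter> closure W"
    have "W \<subseteq> {y. ip y x = 0}"
    proof
      fix y assume "y \<in> W"
      then obtain i c where "y = sc c (e' i)" unfolding W_def by blast
      then have "ip y x = c * ip (e' i) x" by (simp add: ip_sc1)
      also have "ip (e' i) x = cnj (ip x (e' i))" by (rule ip_cnj)
      finally have "ip y x = c * cnj (ip x (e' i))" .
      then show "y \<in> {y. ip y x = 0}" using Zorth x by simp
    qed
    then have "closure W \<subseteq> {y. ip y x = 0}"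
      by (rule closure_minimal) (rule closed_ip)
    then have "ip x x = 0" using x by auto
    then have "(norm x)\<^sup>2 = 0" using ip_norm[of x] by simp
    then show "x \<in> {0}" by simp
  qed
  have LZ: "L \<subseteq> Z"
  proof
    fix x assume "x \<in> L"
    then obtain j c where xe: "x = sc c (e j)" unfolding L_def by blast
    have "x \<in> cspan sc (range e)" unfolding cspan_def
      by (rule CollectI, rule exI[of _ "{e j}"], rule exI[of _ "\<lambda>_. c"]) (simp add: xe)
    then show "x \<in> Z" unfolding Z_def using closure_subset by blast
  qed
  have 0: "0 \<in> L" unfolding L_def using sc_0[of "e 0"] by (auto intro!: exI[of _ 0] image_eqI[of _ _ 0])
  have Fle: "\<forall>a\<in>L. F a \<le> p a"
  proof
    fix a assume "a \<in> L"
    then have "F a + F 0 \<le> p (a + 0)" using hyp 0 ip_02[of a] unfolding L_def by blast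
    then show "F a \<le> p a" using F0 by simp
  qed
  have pc: "continuous_on UNIV p" using uc by (rule uniformly_continuous_imp_continuous)
  obtain Fh where Fh: "continuous_on UNIV Fh" "\<forall>z\<in>Z. Fh z = F z" "\<forall>y\<in>W. Fh y = - p (-y)"
    using extend_gen[of Z W F p] ZW Fc pc F0 p0 unfolding Z_def by auto
  show ?thesis
  proof (intro exI[of _ Fh] conjI ballI impI)
    show "continuous_on UNIV Fh" by fact
    show "Fh z = F z" if "z \<in> closure (cspan sc (range e))" for z using Fh that Z_def by auto
    fix x1 x2 assume x1: "x1 \<in> (\<Union>j. range (\<lambda>c. sc c (e j))) \<union> (\<Union>i. range (\<lambda>c. sc c (e' i)))"
      and x2: "x2 \<in> (\<Union>j. range (\<lambda>c. sc c (e j))) \<union> (\<Union>i. range (\<lambda>c. sc c (e' i)))"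
      and io: "ip x1 x2 = 0"
    show "Fh x1 + Fh x2 \<le> p (x1 + x2)"
    proof (rule ineq_gen[OF sub p0 _ Fh(3)])
      show "\<forall>a\<in>L. Fh a \<le> p a" using Fle Fh(2) LZ by auto
      show "x1 \<in> L \<union> W" "x2 \<in> L \<union> W" using x1 x2 by (auto simp: L_def W_def)
      assume "x1 \<in> L" "x2 \<in> L"
      moreover have "Fh x1 = F x1" "Fh x2 = F x2" using \<open>x1 \<in> L\<close> \<open>x2 \<in> L\<close> Fh(2) LZ by auto
      moreover have "F x1 + F x2 \<le> p (x1 + x2)"
        using hyp io \<open>x1 \<in> L\<close> \<open>x2 \<in> L\<close> unfolding L_def by blast
      ultimately show "Fh x1 + Fh x2 \<le> p (x1 + x2)" by simp
    qed
  qed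
qed

end

theorem theorem5:
  shows
  \<comment> \<open>Case K = real\<close>
  "(\<forall>(e :: nat \<Rightarrow> 'a::{real_inner,complete_space}) (e' :: nat \<Rightarrow> 'a) (p :: 'a \<Rightarrow> real) (F :: 'a \<Rightarrow> real).
      inj e \<and> inj e' \<and> range e \<inter> range e' = {} \<and>
      (\<forall>u\<in>range e \<union> range e'. \<forall>v\<in>range e \<union> range e'. inner u v = (if u = v then 1 else 0)) \<and>
      closure (span (range e \<union> range e')) = UNIV \<and>
      uniformly_continuous_on UNIV p \<and> (\<forall>x y. p (x + y) \<le> p x + p y) \<and> p 0 = 0 \<and>
      continuous_on (closure (span (range e))) F \<and> F 0 = 0 \<and>
      (\<forall>z1\<in>(\<Union>j. range (\<lambda>c. c *\<^sub>R e j)). \<forall>z2\<in>(\<Union>j. range (\<lambda>c. c *\<^sub>R e j)).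
          inner z1 z2 = 0 \<longrightarrow> F z1 + F z2 \<le> p (z1 + z2))
      \<longrightarrow> (\<exists>Fh :: 'a \<Rightarrow> real. continuous_on UNIV Fh \<and>
            (\<forall>z\<in>closure (span (range e)). Fh z = F z) \<and>
            (\<forall>x1\<in>(\<Union>j. range (\<lambda>c. c *\<^sub>R e j)) \<union> (\<Union>i. range (\<lambda>c. c *\<^sub>R e' i)).
             \<forall>x2\<in>(\<Union>j. range (\<lambda>c. c *\<^sub>R e j)) \<union> (\<Union>i. range (\<lambda>c. c *\<^sub>R e' i)).
               inner x1 x2 = 0 \<longrightarrow> Fh x1 + Fh x2 \<le> p (x1 + x2))))
   \<and>
  \<comment> \<open>Case K = complex\<close>
   (\<forall>sc ip (e :: nat \<Rightarrow> 'b::{real_normed_vector,complete_space}) (e' :: nat \<Rightarrow> 'b) (p :: 'b \<Rightarrow> real) (F :: 'b \<Rightarrow> real).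
      complex_hilbert sc ip \<and>
      inj e \<and> inj e' \<and> range e \<inter> range e' = {} \<and>
      (\<forall>u\<in>range e \<union> range e'. \<forall>v\<in>range e \<union> range e'. ip u v = (if u = v then 1 else 0)) \<and>
      closure (cspan sc (range e \<union> range e')) = UNIV \<and>
      uniformly_continuous_on UNIV p \<and> (\<forall>x y. p (x + y) \<le> p x + p y) \<and> p 0 = 0 \<and>
      continuous_on (closure (cspan sc (range e))) F \<and> F 0 = 0 \<and>
      (\<forall>z1\<in>(\<Union>j. range (\<lambda>c. sc c (e j))). \<forall>z2\<in>(\<Union>j. range (\<lambda>c. sc c (e j))).
          ip z1 z2 = 0 \<longrightarrow> F z1 + F z2 \<le> p (z1 + z2))
      \<longrightarrow> (\<exists>Fh :: 'b \<Rightarrow> real. continuous_on UNIV Fh \<and>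
            (\<forall>z\<in>closure (cspan sc (range e)). Fh z = F z) \<and>
            (\<forall>x1\<in>(\<Union>j. range (\<lambda>c. sc c (e j))) \<union> (\<Union>i. range (\<lambda>c. sc c (e' i))).
             \<forall>x2\<in>(\<Union>j. range (\<lambda>c. sc c (e j))) \<union> (\<Union>i. range (\<lambda>c. sc c (e' i))).
               ip x1 x2 = 0 \<longrightarrow> Fh x1 + Fh x2 \<le> p (x1 + x2))))"
  apply (intro conjI allI impI)
   apply (elim conjE, rule real_case, assumption+)
  apply (elim conjE)
  apply (rule complex_case, assumption+)
  done

end
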